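(* For every type $t$, if $u:\mathbb{N}\to[\![t]\!]$ and $u':\mathbb{N}\to[\![t]\!]_s$ are ascending chains with $\mathsf{sim}\,t\,u_i\,u'_i$ for all $i$, then $\mathsf{sim}\,t\,(\bigsqcup_i u_i)\,(\bigsqcup_i u'_i)$.
   Context: Fix sets $\mathsf{Principals}$, $\mathsf{Privileges}$ and $\mathcal{A}:\mathsf{Principals}\to\mathcal{P}(\mathsf{Privileges})$. Types $t::=\mathtt{bool}\mid t_1\to t_2$. $\bot,\star$ are two distinct values, neither booleans nor functions. For a cpo $C$, $C_{\bot\star}=C\cup\{\bot,\star\}$ with $u\le v$ iff $u=\bot$ or $u=v$ or $u,v\in C$, $u\le v$. Eager domains: $[\![\mathtt{bool}]\!]=\{\mathsf{true},\mathsf{false}\}$, $\mathcal{P}(\mathsf{Privileges})$ ordered by equality, $[\![t_1\to t_2]\!]=\mathcal{P}(\mathsf{Privileges})\to[\![t_1]\!]\to[\![t_2]\!]_{\bot\star}$ (continuous, pointwise order, lubs pointwise). Stacks: $\mathsf{Stacks}$ = nonempty lists of pairs $\langle n,P\rangle\in\mathsf{Principals}\times\mathcal{P}(\mathsf{Privileges})$, ordered by equality; $\mathsf{check}(p,\mathrm{nil})$ false, $\mathsf{check}(p,\langle n,P\rangle::S)$ iff $p\in\mathcal{A}(n)\wedge(p\in P\vee\mathsf{check}(p,S))$; $\mathsf{privs}(S)=\{p:\mathsf{check}(p,S)\}$. Stack domains: $[\![\mathtt{bool}]\!]_s=\{\mathsf{true},\mathsf{false}\}$, $[\![t_1\to t_2]\!]_s=\mathsf{Stacks}\to[\![t_1]\!]_s\to([\![t_2]\!]_s)_{\bot\star}$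 (continuous, pointwise, lubs pointwise). Relation $\mathsf{sim}\,t\subseteq[\![t]\!]_{\bot\star}\times([\![t]\!]_s)_{\bot\star}$: $\mathsf{sim}\,t\,d\,d'$ is true if $d=d'\in\{\bot,\star\}$, false if $d\ne d'$ and one of them is in $\{\bot,\star\}$; otherwise $\mathsf{sim}\,\mathtt{bool}\,b\,b'$ iff $b=b'$, and $\mathsf{sim}(t_1\to t_2)\,f\,f'$ iff for all $S\in\mathsf{Stacks}$, $d\in[\![t_1]\!]$, $d'\in[\![t_1]\!]_s$: $\mathsf{sim}\,t_1\,d\,d'$ implies $\mathsf{sim}\,t_2\,(f(\mathsf{privs}\,S)d)\,(f'Sd')$. *)

theory Defs
  imports Main
begin

datatype ty = TBool | TFun ty ty

datatype 'a lift = Bot | Star | Val 'a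

definition liftset :: "'a set \<Rightarrow> 'a lift set" where
  "liftset D = {Bot, Star} \<union> Val ` D"

definition lift_le :: "('a \<Rightarrow> 'a \<Rightarrow> bool) \<Rightarrow> 'a lift \<Rightarrow> 'a lift \<Rightarrow> bool" where
  "lift_le L u v \<longleftrightarrow> u = Bot \<or> u = v \<or> (\<exists>x y. u = Val x \<and> v = Val y \<and> L x y)"

definition is_chain :: "'a set \<Rightarrow> ('a \<Rightarrow> 'a \<Rightarrow> bool) \<Rightarrow> (nat \<Rightarrow> 'a) \<Rightarrow> bool" where
  "is_chain D L c \<longleftrightarrow> (\<forall>i. c i \<in> D \<and> L (c i) (c (Suc i)))"

definition is_lub :: "'a set \<Rightarrow> ('a \<Rightarrow> 'a \<Rightarrow> bool) \<Rightarrow> 'a set \<Rightarrow> 'a \<Rightarrow> bool" where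
  "is_lub D L Y x \<longleftrightarrow> x \<in> D \<and> (\<forall>y\<in>Y. L y x) \<and> (\<forall>z\<in>D. (\<forall>y\<in>Y. L y z) \<longrightarrow> L x z)"

definition chain_lub :: "'a set \<Rightarrow> ('a \<Rightarrow> 'a \<Rightarrow> bool) \<Rightarrow> (nat \<Rightarrow> 'a) \<Rightarrow> 'a" where
  "chain_lub D L c = (THE x. is_lub D L (range c) x)"

definition cont_fun ::
  "'a set \<Rightarrow> ('a \<Rightarrow> 'a \<Rightarrow> bool) \<Rightarrow> 'b set \<Rightarrow> ('b \<Rightarrow> 'b \<Rightarrow> bool) \<Rightarrow> ('a \<Rightarrow> 'b) \<Rightarrow> bool" where
  "cont_fun D1 L1 D2 L2 g \<longleftrightarrow>
     (\<forall>x\<in>D1. g x \<in> D2) \<and>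
     (\<forall>x\<in>D1. \<forall>y\<in>D1. L1 x y \<longrightarrow> L2 (g x) (g y)) \<and>
     (\<forall>c x. is_chain D1 L1 c \<and> is_lub D1 L1 (range c) x \<longrightarrow> is_lub D2 L2 (g ` range c) (g x))"

text \<open>eB embeds the booleans; eA x is the function (P(Privileges) -> 'e -> 'e lift)
  represented by the code x. eden t = (carrier of [[t]], order of [[t]]).\<close>

primrec eden :: "(bool \<Rightarrow> 'e) \<Rightarrow> ('e \<Rightarrow> 'p set \<Rightarrow> 'e \<Rightarrow> 'e lift) \<Rightarrow> ty \<Rightarrow> 'e set \<times> ('e \<Rightarrow> 'e \<Rightarrow> bool)" where
  "eden eB eA TBool = (range eB, (=))"
| "eden eB eA (TFun t1 t2) =
     ({x. \<forall>P. cont_fun (fst (eden eB eA t1)) (snd (eden eB eA t1))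
                        (liftset (fst (eden eB eA t2))) (lift_le (snd (eden eB eA t2))) (eA x P)},
      (\<lambda>x y. \<forall>P. \<forall>d\<in>fst (eden eB eA t1). lift_le (snd (eden eB eA t2)) (eA x P d) (eA y P d)))"

text \<open>Adequacy of the universe for t: for every arrow subtype t1 -> t2 of t, the codes in
  [[t1 -> t2]] correspond bijectively (via eA, restricted to [[t1]]) to the continuous functions
  P(Privileges) -> [[t1]] -> [[t2]]_{bot,star}.\<close>

primrec eager_adequate :: "(bool \<Rightarrow> 'e) \<Rightarrow> ('e \<Rightarrow> 'p set \<Rightarrow> 'e \<Rightarrow> 'e lift) \<Rightarrow> ty \<Rightarrow> bool" where
  "eager_adequate eB eA TBool = True"
| "eager_adequate eB eA (TFun t1 t2) =
     (eager_adequate eB eA t1 \<and> eager_adequate eB eA t2 \<and>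
      (\<forall>x\<in>fst (eden eB eA (TFun t1 t2)). \<forall>y\<in>fst (eden eB eA (TFun t1 t2)).
          (\<forall>P. \<forall>d\<in>fst (eden eB eA t1). eA x P d = eA y P d) \<longrightarrow> x = y) \<and>
      (\<forall>f. (\<forall>P. cont_fun (fst (eden eB eA t1)) (snd (eden eB eA t1))
                        (liftset (fst (eden eB eA t2))) (lift_le (snd (eden eB eA t2))) (f P)) \<longrightarrow>
          (\<exists>x\<in>fst (eden eB eA (TFun t1 t2)). \<forall>P. \<forall>d\<in>fst (eden eB eA t1). eA x P d = f P d)))"

text \<open>Stacks are nonempty lists of pairs (n, P); a code's behaviour on the empty list is irrelevant.\<close>

primrec sden :: "(bool \<Rightarrow> 's) \<Rightarrow> ('s \<Rightarrow> ('n \<times> 'p set) list \<Rightarrow> 's \<Rightarrow> 's lift) \<Rightarrow> ty \<Rightarrow> 's set \<times> ('s \<Rightarrow> 's \<Rightarrow> bool)" where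
  "sden sB sA TBool = (range sB, (=))"
| "sden sB sA (TFun t1 t2) =
     ({x. \<forall>S. S \<noteq> [] \<longrightarrow> cont_fun (fst (sden sB sA t1)) (snd (sden sB sA t1))
                        (liftset (fst (sden sB sA t2))) (lift_le (snd (sden sB sA t2))) (sA x S)},
      (\<lambda>x y. \<forall>S. S \<noteq> [] \<longrightarrow> (\<forall>d\<in>fst (sden sB sA t1). lift_le (snd (sden sB sA t2)) (sA x S d) (sA y S d))))"

primrec stack_adequate :: "(bool \<Rightarrow> 's) \<Rightarrow> ('s \<Rightarrow> ('n \<times> 'p set) list \<Rightarrow> 's \<Rightarrow> 's lift) \<Rightarrow> ty \<Rightarrow> bool" where
  "stack_adequate sB sA TBool = True"
| "stack_adequate sB sA (TFun t1 t2) =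
     (stack_adequate sB sA t1 \<and> stack_adequate sB sA t2 \<and>
      (\<forall>x\<in>fst (sden sB sA (TFun t1 t2)). \<forall>y\<in>fst (sden sB sA (TFun t1 t2)).
          (\<forall>S. S \<noteq> [] \<longrightarrow> (\<forall>d\<in>fst (sden sB sA t1). sA x S d = sA y S d)) \<longrightarrow> x = y) \<and>
      (\<forall>f. (\<forall>S. S \<noteq> [] \<longrightarrow> cont_fun (fst (sden sB sA t1)) (snd (sden sB sA t1))
                        (liftset (fst (sden sB sA t2))) (lift_le (snd (sden sB sA t2))) (f S)) \<longrightarrow>
          (\<exists>x\<in>fst (sden sB sA (TFun t1 t2)). \<forall>S. S \<noteq> [] \<longrightarrow> (\<forall>d\<in>fst (sden sB sA t1). sA x S d = f S d))))"

fun check :: "('n \<Rightarrow> 'p set) \<Rightarrow> 'p \<Rightarrow> ('n \<times> 'p set) list \<Rightarrow> bool" where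
  "check Au p [] = False"
| "check Au p ((n, P) # S) = (p \<in> Au n \<and> (p \<in> P \<or> check Au p S))"

definition privs :: "('n \<Rightarrow> 'p set) \<Rightarrow> ('n \<times> 'p set) list \<Rightarrow> 'p set" where
  "privs Au S = {p. check Au p S}"

definition lift_rel :: "('a \<Rightarrow> 'b \<Rightarrow> bool) \<Rightarrow> 'a lift \<Rightarrow> 'b lift \<Rightarrow> bool" where
  "lift_rel R d d' =
     (case d of
        Bot \<Rightarrow> d' = Bot
      | Star \<Rightarrow> d' = Star
      | Val x \<Rightarrow> (case d' of Val y \<Rightarrow> R x y | _ \<Rightarrow> False))"

primrec sim :: "('n \<Rightarrow> 'p set) \<Rightarrow> (bool \<Rightarrow> 'e) \<Rightarrow> ('e \<Rightarrow> 'p set \<Rightarrow> 'e \<Rightarrow> 'e lift)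
   \<Rightarrow> (bool \<Rightarrow> 's) \<Rightarrow> ('s \<Rightarrow> ('n \<times> 'p set) list \<Rightarrow> 's \<Rightarrow> 's lift) \<Rightarrow> ty \<Rightarrow> 'e lift \<Rightarrow> 's lift \<Rightarrow> bool" where
  "sim Au eB eA sB sA TBool = lift_rel (\<lambda>x y. \<exists>b b'. x = eB b \<and> y = sB b' \<and> b = b')"
| "sim Au eB eA sB sA (TFun t1 t2) = lift_rel (\<lambda>f g.
     \<forall>S. S \<noteq> [] \<longrightarrow>
       (\<forall>d\<in>fst (eden eB eA t1). \<forall>d'\<in>fst (sden sB sA t1).
          sim Au eB eA sB sA t1 (Val d) (Val d') \<longrightarrow>
          sim Au eB eA sB sA t2 (eA f (privs Au S) d) (sA g S d')))"

end

theory Submission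
  imports Defs
begin

definition po :: "'a set \<Rightarrow> ('a \<Rightarrow> 'a \<Rightarrow> bool) \<Rightarrow> bool" where
  "po D L \<longleftrightarrow> (\<forall>x\<in>D. L x x) \<and> (\<forall>x\<in>D. \<forall>y\<in>D. \<forall>z\<in>D. L x y \<longrightarrow> L y z \<longrightarrow> L x z)
     \<and> (\<forall>x\<in>D. \<forall>y\<in>D. L x y \<longrightarrow> L y x \<longrightarrow> x = y)"

definition cpl :: "'a set \<Rightarrow> ('a \<Rightarrow> 'a \<Rightarrow> bool) \<Rightarrow> bool" where
  "cpl D L \<longleftrightarrow> (\<forall>c. is_chain D L c \<longrightarrow> (\<exists>x. is_lub D L (range c) x))"

definition unval :: "'a lift \<Rightarrow> 'a" where
  "unval v = (case v of Val x \<Rightarrow> x)"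

lemma unval_Val[simp]: "unval (Val x) = x" by (simp add: unval_def)

lemma lub_unique: "po D L \<Longrightarrow> is_lub D L Y x \<Longrightarrow> is_lub D L Y y \<Longrightarrow> x = y"
  unfolding po_def is_lub_def by blast

lemma chain_lub_eq: "po D L \<Longrightarrow> is_lub D L (range c) x \<Longrightarrow> chain_lub D L c = x"
  unfolding chain_lub_def by (rule the_equality) (auto intro: lub_unique)

lemma chain_lub_is: "po D L \<Longrightarrow> cpl D L \<Longrightarrow> is_chain D L c \<Longrightarrow> is_lub D L (range c) (chain_lub D L c)"
  by (metis chain_lub_eq cpl_def)

lemma chain_mem: "is_chain D L c \<Longrightarrow> c i \<in> D" by (simp add: is_chain_def)

lemma chain_le: assumes "po D L" "is_chain D L c" "i \<le> j" shows "L (c i) (c j)"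
  using assms(3)
proof (induction j)
  case 0 then show ?case using assms unfolding po_def is_chain_def by auto
next
  case (Suc j)
  show ?case
  proof (cases "i = Suc j")
    case True then show ?thesis using assms unfolding po_def is_chain_def by auto
  next
    case False then have "i \<le> j" using Suc by auto
    then have "L (c i) (c j)" using Suc by auto
    then show ?thesis using assms unfolding po_def is_chain_def by blast
  qed
qed

lemma lift_rel_simps[simp]:
  "lift_rel R Bot d \<longleftrightarrow> d = Bot" "lift_rel R Star d \<longleftrightarrow> d = Star"
  "lift_rel R (Val x) d \<longleftrightarrow> (\<exists>y. d = Val y \<and> R x y)"
  by (auto simp: lift_rel_def split: lift.splits)

lemma lift_le_simps[simp]:
  "lift_le L Bot v" "lift_le L Star v \<longleftrightarrow> v = Star"
  "lift_le L (Val x) v \<longleftrightarrow> (\<exists>y. v = Val y \<and> (x = y \<or> L x y))"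
  by (auto simp: lift_le_def)

lemma po_lift: assumes "po D L" shows "po (liftset D) (lift_le L)"
  unfolding po_def
proof (intro conjI ballI impI)
  fix x assume "x \<in> liftset D" then show "lift_le L x x" by (auto simp: lift_le_def)
next
  fix x y z assume m: "x \<in> liftset D" "y \<in> liftset D" "z \<in> liftset D" and "lift_le L x y" "lift_le L y z"
  then show "lift_le L x z" using assms unfolding po_def liftset_def lift_le_def by blast
next
  fix x y assume m: "x \<in> liftset D" "y \<in> liftset D" and "lift_le L x y" "lift_le L y x"
  then show "x = y" using assms unfolding po_def liftset_def lift_le_def by blast
qed

lemma lift_bot_lub:
  assumes "\<forall>i. c i = Bot"
  shows "is_lub (liftset D) (lift_le L) (range c) Bot"
  using assms unfolding is_lub_def liftset_def by auto

lemma lift_star_lub: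
  assumes "po D L" "is_chain (liftset D) (lift_le L) c" "c k = Star"
  shows "is_lub (liftset D) (lift_le L) (range c) Star"
proof -
  have P: "po (liftset D) (lift_le L)" using po_lift[OF assms(1)] .
  have all: "c i = Bot \<or> c i = Star" for i
  proof (cases "i \<le> k")
    case True
    then have "lift_le L (c i) (c k)" using chain_le[OF P assms(2)] by blast
    then show ?thesis using assms(3) by (cases "c i") auto
  next
    case False
    then have "lift_le L (c k) (c i)" using chain_le[OF P assms(2)] by auto
    then show ?thesis using assms(3) by auto
  qed
  show ?thesis unfolding is_lub_def
  proof (intro conjI ballI impI)
    show "Star \<in> liftset D" by (simp add: liftset_def)
  next
    fix y assume "y \<in> range c" then show "lift_le L y Star" using all by (metis imageE lift_le_simps(1,2))
  next
    fix z assume "\<forall>y\<in>range c. lift_le L y z"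
    then have "lift_le L (c k) z" by auto
    then show "lift_le L Star z" using assms(3) by auto
  qed
qed

lemma po_refl: "po D L \<Longrightarrow> x \<in> D \<Longrightarrow> L x x" unfolding po_def by blast
lemma po_trans: "po D L \<Longrightarrow> x \<in> D \<Longrightarrow> y \<in> D \<Longrightarrow> z \<in> D \<Longrightarrow> L x y \<Longrightarrow> L y z \<Longrightarrow> L x z"
  unfolding po_def by blast
lemma po_antisym: "po D L \<Longrightarrow> x \<in> D \<Longrightarrow> y \<in> D \<Longrightarrow> L x y \<Longrightarrow> L y x \<Longrightarrow> x = y"
  unfolding po_def by blast

lemma lift_val_lub:
  assumes "po D L" "cpl D L" "is_chain (liftset D) (lift_le L) c" "c k = Val x"
  shows "is_chain D L (\<lambda>n. unval (c (n + k)))"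
    and "is_lub (liftset D) (lift_le L) (range c) (Val (chain_lub D L (\<lambda>n. unval (c (n + k)))))"
proof -
  have P: "po (liftset D) (lift_le L)" using po_lift[OF assms(1)] .
  have mem: "\<And>i. c i \<in> liftset D" using chain_mem[OF assms(3)] .
  have V: "\<exists>y\<in>D. c i = Val y" if "k \<le> i" for i
  proof -
    have "lift_le L (c k) (c i)" using chain_le[OF P assms(3) that] .
    then obtain y where "c i = Val y" using assms(4) by auto
    moreover then have "y \<in> D" using mem[of i] unfolding liftset_def by auto
    ultimately show ?thesis by blast
  qed
  define v where "v = (\<lambda>n. unval (c (n + k)))"
  have cv: "c (n + k) = Val (v n) \<and> v n \<in> D" for n
  proof -
    obtain y where "y \<in> D" "c (n+k) = Val y" using V[of "n+k"] by auto
    then show ?thesis unfolding v_def by simp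
  qed
  have ch: "is_chain D L v"
    unfolding is_chain_def
  proof
    fix i
    have "lift_le L (c (i + k)) (c (Suc i + k))" using assms(3) unfolding is_chain_def by simp
    then have "v i = v (Suc i) \<or> L (v i) (v (Suc i))" using cv[of i] cv[of "Suc i"] by auto
    then show "v i \<in> D \<and> L (v i) (v (Suc i))" using cv[of i] po_refl[OF assms(1)] by auto
  qed
  then show "is_chain D L (\<lambda>n. unval (c (n + k)))" unfolding v_def .
  have lv: "is_lub D L (range v) (chain_lub D L v)" using chain_lub_is[OF assms(1,2) ch] .
  have lD: "chain_lub D L v \<in> D" using lv unfolding is_lub_def by blast
  show "is_lub (liftset D) (lift_le L) (range c) (Val (chain_lub D L (\<lambda>n. unval (c (n + k)))))"
    unfolding v_def[symmetric] is_lub_def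
  proof (intro conjI ballI impI)
    show "Val (chain_lub D L v) \<in> liftset D" using lD unfolding liftset_def by auto
  next
    fix y assume "y \<in> range c"
    then obtain i where y: "y = c i" by auto
    have 1: "lift_le L (c i) (c (i + k))" using chain_le[OF P assms(3)] by simp
    have "L (v i) (chain_lub D L v)" using lv unfolding is_lub_def by blast
    then have 2: "lift_le L (c (i+k)) (Val (chain_lub D L v))" using cv[of i] by auto
    have 3: "Val (chain_lub D L v) \<in> liftset D" using lD unfolding liftset_def by auto
    show "lift_le L y (Val (chain_lub D L v))" using po_trans[OF P mem mem 3 1 2] y by simp
  next
    fix z assume z: "z \<in> liftset D" "\<forall>y\<in>range c. lift_le L y z"
    then have "lift_le L (c k) z" by auto
    then obtain w where w: "z = Val w" using assms(4) by auto
    then have wD: "w \<in> D" using z unfolding liftset_def by auto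
    have "L (v n) w" for n
    proof -
      have "lift_le L (c (n+k)) z" using z by auto
      then have "v n = w \<or> L (v n) w" using cv[of n] w by auto
      then show ?thesis using po_refl[OF assms(1) wD] by auto
    qed
    then have "L (chain_lub D L v) w" using lv wD unfolding is_lub_def by auto
    then show "lift_le L (Val (chain_lub D L v)) z" using w by auto
  qed
qed

lemma cpl_lift: assumes "po D L" "cpl D L" shows "cpl (liftset D) (lift_le L)"
  unfolding cpl_def
proof (intro allI impI)
  fix c assume c: "is_chain (liftset D) (lift_le L) c"
  show "\<exists>x. is_lub (liftset D) (lift_le L) (range c) x"
  proof (cases "\<forall>i. c i = Bot")
    case True then show ?thesis using lift_bot_lub by blast
  next
    case False
    then obtain k where k: "c k \<noteq> Bot" by auto
    then show ?thesis
      by (cases "c k") (use lift_star_lub[OF assms(1) c] lift_val_lub(2)[OF assms c] in blast)+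
  qed
qed


lemma cont_lub:
  assumes p1: "po D1 L1" and p2: "po D2 L2" and c2: "cpl D2 L2"
    and F: "\<And>n. cont_fun D1 L1 D2 L2 (F n)"
    and mono: "\<And>n d. d \<in> D1 \<Longrightarrow> L2 (F n d) (F (Suc n) d)"
  shows "cont_fun D1 L1 D2 L2 (\<lambda>d. chain_lub D2 L2 (\<lambda>n. F n d))"
proof -
  define G where "G = (\<lambda>d. chain_lub D2 L2 (\<lambda>n. F n d))"
  have Fm: "F n d \<in> D2" if "d \<in> D1" for n d using F[of n] that unfolding cont_fun_def by blast
  have Fmono: "L2 (F n x) (F n y)" if "x \<in> D1" "y \<in> D1" "L1 x y" for n x y
    using F[of n] that unfolding cont_fun_def by blast
  have ch: "is_chain D2 L2 (\<lambda>n. F n d)" if "d \<in> D1" for d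
    unfolding is_chain_def using Fm mono that by blast
  have G: "is_lub D2 L2 (range (\<lambda>n. F n d)) (G d)" if "d \<in> D1" for d
    unfolding G_def using chain_lub_is[OF p2 c2 ch[OF that]] .
  have GD: "G d \<in> D2" if "d \<in> D1" for d using G[OF that] unfolding is_lub_def by blast
  have Gup: "L2 (F n d) (G d)" if "d \<in> D1" for n d using G[OF that] unfolding is_lub_def by blast
  have Gleast: "L2 (G d) z" if "d \<in> D1" "z \<in> D2" "\<And>n. L2 (F n d) z" for d z
    using G[OF that(1)] that unfolding is_lub_def by blast
  have Gmono: "L2 (G x) (G y)" if "x \<in> D1" "y \<in> D1" "L1 x y" for x y
  proof (rule Gleast[OF that(1) GD[OF that(2)]])
    fix n show "L2 (F n x) (G y)"
      using po_trans[OF p2 Fm[OF that(1)] Fm[OF that(2)] GD[OF that(2)] Fmono[OF that] Gup[OF that(2)]] .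
  qed
  have "is_lub D2 L2 (G ` range c) (G x)" if c: "is_chain D1 L1 c" and x: "is_lub D1 L1 (range c) x" for c x
  proof -
    have xD: "x \<in> D1" using x unfolding is_lub_def by blast
    have cD: "c j \<in> D1" for j using chain_mem[OF c] .
    have cx: "L1 (c j) x" for j using x unfolding is_lub_def by blast
    show ?thesis unfolding is_lub_def
    proof (intro conjI ballI impI)
      show "G x \<in> D2" using GD[OF xD] .
    next
      fix y assume "y \<in> G ` range c"
      then obtain j where "y = G (c j)" by auto
      then show "L2 y (G x)" using Gmono[OF cD xD cx] by simp
    next
      fix z assume z: "z \<in> D2" "\<forall>y\<in>G ` range c. L2 y z"
      show "L2 (G x) z"
      proof (rule Gleast[OF xD z(1)])
        fix n
        have lub: "is_lub D2 L2 (F n ` range c) (F n x)" using F[of n] c x unfolding cont_fun_def by blast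
        have "L2 (F n (c j)) z" for j
          using po_trans[OF p2 Fm[OF cD] GD[OF cD] z(1) Gup[OF cD]] z(2) by blast
        then show "L2 (F n x) z" using lub z(1) unfolding is_lub_def by blast
      qed
    qed
  qed
  then show ?thesis unfolding cont_fun_def G_def[symmetric] using GD Gmono by blast
qed

lemma fun_dom:
  assumes p1: "po D1 L1" and p2: "po D2 L2" and c2: "cpl D2 L2"
    and Ddef: "D = {x. \<forall>i\<in>I. cont_fun D1 L1 (liftset D2) (lift_le L2) (A x i)}"
    and Ldef: "L = (\<lambda>x y. \<forall>i\<in>I. \<forall>d\<in>D1. lift_le L2 (A x i d) (A y i d))"
    and inj: "\<forall>x\<in>D. \<forall>y\<in>D. (\<forall>i\<in>I. \<forall>d\<in>D1. A x i d = A y i d) \<longrightarrow> x = y"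
    and surj: "\<forall>f. (\<forall>i\<in>I. cont_fun D1 L1 (liftset D2) (lift_le L2) (f i)) \<longrightarrow>
                  (\<exists>x\<in>D. \<forall>i\<in>I. \<forall>d\<in>D1. A x i d = f i d)"
  shows "po D L \<and> cpl D L \<and> (\<forall>c. is_chain D L c \<longrightarrow> (\<forall>i\<in>I. \<forall>d\<in>D1.
            A (chain_lub D L c) i d = chain_lub (liftset D2) (lift_le L2) (\<lambda>n. A (c n) i d)))"
proof -
  have P2: "po (liftset D2) (lift_le L2)" using po_lift[OF p2] .
  have C2: "cpl (liftset D2) (lift_le L2)" using cpl_lift[OF p2 c2] .
  have Am: "A x i d \<in> liftset D2" if "x \<in> D" "i \<in> I" "d \<in> D1" for x i d
    using that unfolding Ddef cont_fun_def by blast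
  have po: "po D L" unfolding po_def
  proof (intro conjI ballI impI)
    fix x assume "x \<in> D" then show "L x x" unfolding Ldef by (simp add: lift_le_def)
  next
    fix x y z assume m: "x \<in> D" "y \<in> D" "z \<in> D" and "L x y" "L y z"
    then show "L x z" unfolding Ldef using po_trans[OF P2 Am Am Am] by metis
  next
    fix x y assume m: "x \<in> D" "y \<in> D" and "L x y" "L y x"
    then have "\<forall>i\<in>I. \<forall>d\<in>D1. A x i d = A y i d" unfolding Ldef using po_antisym[OF P2 Am Am] by metis
    then show "x = y" using inj m by blast
  qed
  have main: "\<exists>x. is_lub D L (range c) x \<and> (\<forall>i\<in>I. \<forall>d\<in>D1.
            A x i d = chain_lub (liftset D2) (lift_le L2) (\<lambda>n. A (c n) i d))"
    if c: "is_chain D L c" for c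
  proof -
    have cD: "c n \<in> D" for n using chain_mem[OF c] .
    have cL: "L (c n) (c (Suc n))" for n using c unfolding is_chain_def by blast
    define f where "f = (\<lambda>i d. chain_lub (liftset D2) (lift_le L2) (\<lambda>n. A (c n) i d))"
    have fc: "cont_fun D1 L1 (liftset D2) (lift_le L2) (f i)" if "i \<in> I" for i
      unfolding f_def
    proof (rule cont_lub[OF p1 P2 C2])
      fix n show "cont_fun D1 L1 (liftset D2) (lift_le L2) (A (c n) i)" using cD[of n] that unfolding Ddef by blast
    next
      fix n d assume "d \<in> D1" then show "lift_le L2 (A (c n) i d) (A (c (Suc n)) i d)"
        using cL[of n] that unfolding Ldef by blast
    qed
    obtain x where xD: "x \<in> D" and xf: "\<forall>i\<in>I. \<forall>d\<in>D1. A x i d = f i d" using surj fc by blast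
    have chp: "is_chain (liftset D2) (lift_le L2) (\<lambda>n. A (c n) i d)" if "i \<in> I" "d \<in> D1" for i d
      unfolding is_chain_def using Am[OF cD that] cL that unfolding Ldef by blast
    have lubp: "is_lub (liftset D2) (lift_le L2) (range (\<lambda>n. A (c n) i d)) (f i d)" if "i \<in> I" "d \<in> D1" for i d
      unfolding f_def using chain_lub_is[OF P2 C2 chp[OF that]] .
    have "is_lub D L (range c) x" unfolding is_lub_def
    proof (intro conjI ballI impI)
      show "x \<in> D" using xD .
    next
      fix y assume "y \<in> range c"
      then obtain n where "y = c n" by auto
      then show "L y x" unfolding Ldef using lubp xf unfolding is_lub_def by auto
    next
      fix z assume z: "z \<in> D" "\<forall>y\<in>range c. L y z"
      show "L x z" unfolding Ldef
      proof (intro ballI)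
        fix i d assume id: "i \<in> I" "d \<in> D1"
        have "\<forall>n. lift_le L2 (A (c n) i d) (A z i d)" using z(2) id unfolding Ldef by blast
        then have "lift_le L2 (f i d) (A z i d)" using lubp[OF id] Am[OF z(1) id] unfolding is_lub_def by blast
        then show "lift_le L2 (A x i d) (A z i d)" using xf id by simp
      qed
    qed
    then show ?thesis using xf unfolding f_def by blast
  qed
  show ?thesis
  proof (intro conjI allI impI)
    show "po D L" using po .
    show "cpl D L" unfolding cpl_def using main by blast
  next
    fix c assume c: "is_chain D L c"
    obtain x where x: "is_lub D L (range c) x" "\<forall>i\<in>I. \<forall>d\<in>D1.
            A x i d = chain_lub (liftset D2) (lift_le L2) (\<lambda>n. A (c n) i d)" using main[OF c] by blast
    show "\<forall>i\<in>I. \<forall>d\<in>D1. A (chain_lub D L c) i d = chain_lub (liftset D2) (lift_le L2) (\<lambda>n. A (c n) i d)"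
      using chain_lub_eq[OF po x(1)] x(2) by simp
  qed
qed


lemma bool_dom: "po (range B) (=)" "cpl (range B) (=)"
  and bool_lub: "is_chain (range B) (=) c \<Longrightarrow> chain_lub (range B) (=) c = c 0 \<and> (\<forall>i. c i = c 0)"
proof -
  show P: "po (range B) (=)" unfolding po_def by blast
  have k: "\<forall>i. c i = c 0" if "is_chain (range B) (=) c" for c :: "nat \<Rightarrow> _"
  proof
    fix i show "c i = c 0" using that by (induction i) (auto simp: is_chain_def)
  qed
  have l: "is_lub (range B) (=) (range c) (c 0)" if "is_chain (range B) (=) c" for c :: "nat \<Rightarrow> _"
    using k[OF that] chain_mem[OF that, of 0] unfolding is_lub_def by auto
  show "cpl (range B) (=)" unfolding cpl_def using l by blast
  show "is_chain (range B) (=) c \<Longrightarrow> chain_lub (range B) (=) c = c 0 \<and> (\<forall>i. c i = c 0)"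
    using chain_lub_eq[OF P l] k by blast
qed

lemma eden_fun:
  assumes "eager_adequate eB eA (TFun t1 t2)"
    and "po (fst (eden eB eA t1)) (snd (eden eB eA t1))"
    and "po (fst (eden eB eA t2)) (snd (eden eB eA t2))"
    and "cpl (fst (eden eB eA t2)) (snd (eden eB eA t2))"
  shows "po (fst (eden eB eA (TFun t1 t2))) (snd (eden eB eA (TFun t1 t2))) \<and>
         cpl (fst (eden eB eA (TFun t1 t2))) (snd (eden eB eA (TFun t1 t2))) \<and>
    (\<forall>c. is_chain (fst (eden eB eA (TFun t1 t2))) (snd (eden eB eA (TFun t1 t2))) c \<longrightarrow>
      (\<forall>i\<in>UNIV. \<forall>d\<in>fst (eden eB eA t1).
        eA (chain_lub (fst (eden eB eA (TFun t1 t2))) (snd (eden eB eA (TFun t1 t2))) c) i d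
        = chain_lub (liftset (fst (eden eB eA t2))) (lift_le (snd (eden eB eA t2))) (\<lambda>n. eA (c n) i d)))"
  apply (rule fun_dom[OF assms(2-4), where I=UNIV and A=eA])
  using assms(1) by simp_all

lemma sden_fun:
  assumes "stack_adequate sB sA (TFun t1 t2)"
    and "po (fst (sden sB sA t1)) (snd (sden sB sA t1))"
    and "po (fst (sden sB sA t2)) (snd (sden sB sA t2))"
    and "cpl (fst (sden sB sA t2)) (snd (sden sB sA t2))"
  shows "po (fst (sden sB sA (TFun t1 t2))) (snd (sden sB sA (TFun t1 t2))) \<and>
         cpl (fst (sden sB sA (TFun t1 t2))) (snd (sden sB sA (TFun t1 t2))) \<and>
    (\<forall>c. is_chain (fst (sden sB sA (TFun t1 t2))) (snd (sden sB sA (TFun t1 t2))) c \<longrightarrow>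
      (\<forall>i\<in>{S. S \<noteq> []}. \<forall>d\<in>fst (sden sB sA t1).
        sA (chain_lub (fst (sden sB sA (TFun t1 t2))) (snd (sden sB sA (TFun t1 t2))) c) i d
        = chain_lub (liftset (fst (sden sB sA t2))) (lift_le (snd (sden sB sA t2))) (\<lambda>n. sA (c n) i d)))"
  apply (rule fun_dom[OF assms(2-4), where I="{S. S \<noteq> []}" and A=sA])
  using assms(1) by simp_all

lemma eden_dom: "eager_adequate eB eA t \<Longrightarrow> po (fst (eden eB eA t)) (snd (eden eB eA t)) \<and> cpl (fst (eden eB eA t)) (snd (eden eB eA t))"
proof (induction t)
  case TBool then show ?case using bool_dom(1,2)[of eB] by simp
next
  case (TFun t1 t2)
  then show ?case using eden_fun[of eB eA t1 t2] by simp
qed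

lemma sden_dom: "stack_adequate sB sA t \<Longrightarrow> po (fst (sden sB sA t)) (snd (sden sB sA t)) \<and> cpl (fst (sden sB sA t)) (snd (sden sB sA t))"
proof (induction t)
  case TBool then show ?case using bool_dom(1,2)[of sB] by simp
next
  case (TFun t1 t2)
  then show ?case using sden_fun[of sB sA t1 t2] by simp
qed


lemma sim_lift: "sim Au eB eA sB sA t x y = lift_rel (\<lambda>a b. sim Au eB eA sB sA t (Val a) (Val b)) x y"
  by (cases t) (auto simp: lift_rel_def split: lift.splits)

lemma lift_sim:
  assumes p: "po D L" "cpl D L" "po D' L'" "cpl D' L'"
    and a: "is_chain (liftset D) (lift_le L) a" and b: "is_chain (liftset D') (lift_le L') b"
    and r: "\<And>i. lift_rel R (a i) (b i)"
    and IH: "\<And>v w. is_chain D L v \<Longrightarrow> is_chain D' L' w \<Longrightarrow> (\<forall>i. R (v i) (w i)) \<Longrightarrow> R (chain_lub D L v) (chain_lub D' L' w)"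
  shows "lift_rel R (chain_lub (liftset D) (lift_le L) a) (chain_lub (liftset D') (lift_le L') b)"
proof (cases "\<forall>i. a i = Bot")
  case True
  then have "\<forall>i. b i = Bot" using r by (metis lift_rel_simps(1))
  then show ?thesis using True chain_lub_eq[OF po_lift[OF p(1)] lift_bot_lub] chain_lub_eq[OF po_lift[OF p(3)] lift_bot_lub]
    by simp
next
  case False
  then obtain k where k: "a k \<noteq> Bot" by auto
  show ?thesis
  proof (cases "a k")
    case Bot then show ?thesis using k by simp
  next
    case Star
    then have "b k = Star" using r[of k] by simp
    then show ?thesis using Star chain_lub_eq[OF po_lift[OF p(1)] lift_star_lub[OF p(1) a]]
       chain_lub_eq[OF po_lift[OF p(3)] lift_star_lub[OF p(3) b]] by simp
  next
    case (Val x)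
    then obtain y where y: "b k = Val y" using r[of k] by auto
    have ea: "chain_lub (liftset D) (lift_le L) a = Val (chain_lub D L (\<lambda>n. unval (a (n + k))))"
      using chain_lub_eq[OF po_lift[OF p(1)] lift_val_lub(2)[OF p(1,2) a Val]] .
    have eb: "chain_lub (liftset D') (lift_le L') b = Val (chain_lub D' L' (\<lambda>n. unval (b (n + k))))"
      using chain_lub_eq[OF po_lift[OF p(3)] lift_val_lub(2)[OF p(3,4) b y]] .
    have ca: "is_chain D L (\<lambda>n. unval (a (n + k)))" using lift_val_lub(1)[OF p(1,2) a Val] .
    have cb: "is_chain D' L' (\<lambda>n. unval (b (n + k)))" using lift_val_lub(1)[OF p(3,4) b y] .
    have "R (unval (a (n + k))) (unval (b (n + k)))" for n
    proof -
      have "lift_le L (a k) (a (n+k))" using chain_le[OF po_lift[OF p(1)] a] by simp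
      then obtain x' where "a (n+k) = Val x'" using Val by auto
      then show ?thesis using r[of "n+k"] by auto
    qed
    then show ?thesis using ea eb IH[OF ca cb] by simp
  qed
qed

theorem lemma6:
  fixes Au :: "'n \<Rightarrow> 'p set"
    and eB :: "bool \<Rightarrow> 'e" and eA :: "'e \<Rightarrow> 'p set \<Rightarrow> 'e \<Rightarrow> 'e lift"
    and sB :: "bool \<Rightarrow> 's" and sA :: "'s \<Rightarrow> ('n \<times> 'p set) list \<Rightarrow> 's \<Rightarrow> 's lift"
    and t :: ty and u :: "nat \<Rightarrow> 'e" and u' :: "nat \<Rightarrow> 's"
  assumes "inj eB" and "inj sB"
    and "eager_adequate eB eA t" and "stack_adequate sB sA t"
    and "is_chain (fst (eden eB eA t)) (snd (eden eB eA t)) u"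
    and "is_chain (fst (sden sB sA t)) (snd (sden sB sA t)) u'"
    and "\<forall>i. sim Au eB eA sB sA t (Val (u i)) (Val (u' i))"
  shows "sim Au eB eA sB sA t
           (Val (chain_lub (fst (eden eB eA t)) (snd (eden eB eA t)) u))
           (Val (chain_lub (fst (sden sB sA t)) (snd (sden sB sA t)) u'))"
  using assms(3-7)
proof (induction t arbitrary: u u')
  case TBool
  have 1: "chain_lub (range eB) (=) u = u 0" using bool_lub[of eB u] TBool.prems(3) by simp
  have 2: "chain_lub (range sB) (=) u' = u' 0" using bool_lub[of sB u'] TBool.prems(4) by simp
  have "sim Au eB eA sB sA TBool (Val (u 0)) (Val (u' 0))" using TBool.prems(5) by blast
  then show ?case using 1 2 by simp
next
  case (TFun t1 t2)
  let ?E1 = "fst (eden eB eA t1)" and ?L1 = "snd (eden eB eA t1)"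
  let ?E2 = "fst (eden eB eA t2)" and ?L2 = "snd (eden eB eA t2)"
  let ?S1 = "fst (sden sB sA t1)" and ?M1 = "snd (sden sB sA t1)"
  let ?S2 = "fst (sden sB sA t2)" and ?M2 = "snd (sden sB sA t2)"
  let ?E = "fst (eden eB eA (TFun t1 t2))" and ?L = "snd (eden eB eA (TFun t1 t2))"
  let ?S = "fst (sden sB sA (TFun t1 t2))" and ?M = "snd (sden sB sA (TFun t1 t2))"
  have ad: "eager_adequate eB eA t1" "eager_adequate eB eA t2"
           "stack_adequate sB sA t1" "stack_adequate sB sA t2" using TFun.prems by auto
  note e1 = eden_dom[OF ad(1)] and e2 = eden_dom[OF ad(2)]
  note s1 = sden_dom[OF ad(3)] and s2 = sden_dom[OF ad(4)]
  have ue: "\<forall>P. \<forall>d\<in>?E1. eA (chain_lub ?E ?L u) P d = chain_lub (liftset ?E2) (lift_le ?L2) (\<lambda>n. eA (u n) P d)"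
    using eden_fun[OF TFun.prems(1) conjunct1[OF e1] conjunct1[OF e2] conjunct2[OF e2]] TFun.prems(3) by blast
  have us: "\<forall>S. S \<noteq> [] \<longrightarrow> (\<forall>d\<in>?S1. sA (chain_lub ?S ?M u') S d = chain_lub (liftset ?S2) (lift_le ?M2) (\<lambda>n. sA (u' n) S d))"
    using sden_fun[OF TFun.prems(2) conjunct1[OF s1] conjunct1[OF s2] conjunct2[OF s2]] TFun.prems(4) by blast
  have uD: "u n \<in> ?E" "u' n \<in> ?S" for n using chain_mem TFun.prems(3,4) by metis+
  have uL: "?L (u n) (u (Suc n))" "?M (u' n) (u' (Suc n))" for n using TFun.prems(3,4) unfolding is_chain_def by blast+
  show ?case
  proof (simp only: sim.simps lift_rel_simps, rule exI, rule conjI[OF refl], intro allI impI ballI)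
    fix S :: "('n \<times> 'p set) list" and d d' assume S: "S \<noteq> []" and d: "d \<in> ?E1" and d': "d' \<in> ?S1"
      and sd: "sim Au eB eA sB sA t1 (Val d) (Val d')"
    let ?P = "privs Au S"
    have ca: "is_chain (liftset ?E2) (lift_le ?L2) (\<lambda>n. eA (u n) ?P d)"
      unfolding is_chain_def
    proof
      fix n
      have "cont_fun ?E1 ?L1 (liftset ?E2) (lift_le ?L2) (eA (u n) ?P)" using uD(1)[of n] by simp
      then have 1: "eA (u n) ?P d \<in> liftset ?E2" using d unfolding cont_fun_def by blast
      have "lift_le ?L2 (eA (u n) ?P d) (eA (u (Suc n)) ?P d)" using uL(1)[of n] d by simp
      then show "eA (u n) ?P d \<in> liftset ?E2 \<and> lift_le ?L2 (eA (u n) ?P d) (eA (u (Suc n)) ?P d)" using 1 by blast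
    qed
    have cb: "is_chain (liftset ?S2) (lift_le ?M2) (\<lambda>n. sA (u' n) S d')"
      unfolding is_chain_def
    proof
      fix n
      have "cont_fun ?S1 ?M1 (liftset ?S2) (lift_le ?M2) (sA (u' n) S)" using uD(2)[of n] S by simp
      then have 1: "sA (u' n) S d' \<in> liftset ?S2" using d' unfolding cont_fun_def by blast
      have "lift_le ?M2 (sA (u' n) S d') (sA (u' (Suc n)) S d')" using uL(2)[of n] d' S by simp
      then show "sA (u' n) S d' \<in> liftset ?S2 \<and> lift_le ?M2 (sA (u' n) S d') (sA (u' (Suc n)) S d')" using 1 by blast
    qed
    have r: "lift_rel (\<lambda>a b. sim Au eB eA sB sA t2 (Val a) (Val b)) (eA (u n) ?P d) (sA (u' n) S d')" for n
    proof -
      have "sim Au eB eA sB sA (TFun t1 t2) (Val (u n)) (Val (u' n))" using TFun.prems(5) by (rule spec)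
      then have "\<forall>S. S \<noteq> [] \<longrightarrow>
       (\<forall>d\<in>?E1. \<forall>d'\<in>?S1. sim Au eB eA sB sA t1 (Val d) (Val d') \<longrightarrow>
          sim Au eB eA sB sA t2 (eA (u n) (privs Au S) d) (sA (u' n) S d'))" by (simp only: sim.simps lift_rel_simps) simp
      then have "sim Au eB eA sB sA t2 (eA (u n) ?P d) (sA (u' n) S d')" using S d d' sd by blast
      then show ?thesis by (subst (asm) sim_lift)
    qed
    have "lift_rel (\<lambda>a b. sim Au eB eA sB sA t2 (Val a) (Val b))
       (chain_lub (liftset ?E2) (lift_le ?L2) (\<lambda>n. eA (u n) ?P d))
       (chain_lub (liftset ?S2) (lift_le ?M2) (\<lambda>n. sA (u' n) S d'))"
    proof (rule lift_sim[OF conjunct1[OF e2] conjunct2[OF e2] conjunct1[OF s2] conjunct2[OF s2] ca cb r])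
      fix v w assume "is_chain ?E2 ?L2 v" "is_chain ?S2 ?M2 w" "\<forall>i. sim Au eB eA sB sA t2 (Val (v i)) (Val (w i))"
      then show "sim Au eB eA sB sA t2 (Val (chain_lub ?E2 ?L2 v)) (Val (chain_lub ?S2 ?M2 w))"
        using TFun.IH(2)[OF ad(2) ad(4)] by blast
    qed
    moreover have "eA (chain_lub ?E ?L u) ?P d = chain_lub (liftset ?E2) (lift_le ?L2) (\<lambda>n. eA (u n) ?P d)"
      using ue d by blast
    moreover have "sA (chain_lub ?S ?M u') S d' = chain_lub (liftset ?S2) (lift_le ?M2) (\<lambda>n. sA (u' n) S d')"
      using us d' S by blast
    ultimately show "sim Au eB eA sB sA t2 (eA (chain_lub ?E ?L u) ?P d) (sA (chain_lub ?S ?M u') S d')"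
      by (subst sim_lift) simp
  qed
qed

end
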